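(* Let $A,B,C$ be non-collinear points of the real affine plane. Let $A^{+},A^{-}$ be points on line $\overleftrightarrow{BC}$, $B^{+},B^{-}$ points on line $\overleftrightarrow{CA}$, and $C^{+},C^{-}$ points on line $\overleftrightarrow{AB}$, with $A^{+}\neq C$, $A^{-}\neq B$, $B^{+}\neq A$, $B^{-}\neq C$, $C^{+}\neq B$, $C^{-}\neq A$, and define $$a^{+}=\frac{|BA^{+}|}{|A^{+}C|},\quad b^{+}=\frac{|CB^{+}|}{|B^{+}A|},\quad c^{+}=\frac{|AC^{+}|}{|C^{+}B|},\quad a^{-}=\frac{|CA^{-}|}{|A^{-}B|},\quad b^{-}=\frac{|AB^{-}|}{|B^{-}C|},\quad c^{-}=\frac{|BC^{-}|}{|C^{-}A|}.$$ Let $\ell_1=\overleftrightarrow{B^{+}C^{-}}$, $\ell_2=\overleftrightarrow{C^{+}A^{-}}$, $\ell_3=\overleftrightarrow{A^{+}B^{-}}$, and suppose $$D_1=1-a^{+}a^{-}+b^{-}(1+a^{-})+c^{+}(1+a^{+}),\quad D_2=1-b^{+}b^{-}+c^{-}(1+b^{-})+a^{+}(1+b^{+}),\quad D_3=1-c^{+}c^{-}+a^{-}(1+c^{-})+b^{+}(1+c^{+})$$ are all nonzero (equivalently, no two of the lines are parallel). Let $P=\ell_2\cap\ell_3$, $Q=\ell_3\cap\ell_1$, $R=\ell_1\cap\ell_2$. Then the signed area of triangle $PQR$ is $$|\triangle PQR|=|\triangle ABC|\cdot\frac{\left(a^{+}b^{+}c^{+}+a^{-}b^{-}c^{-}+a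^{+}a^{-}+b^{+}b^{-}+c^{+}c^{-}-1\right)^2}{D_1D_2D_3}.$$
   Context: Segment lengths are signed: for points on one of the lines $\overleftrightarrow{AB}$, $\overleftrightarrow{BC}$, $\overleftrightarrow{CA}$, $|PQ|$ is positive when $\overrightarrow{PQ}$ points in the direction of $\overrightarrow{AB}$, $\overrightarrow{BC}$, $\overrightarrow{CA}$ respectively; $|PP|/|PQ|=0$. Equivalently, e.g. $A^{+}=(B+a^{+}C)/(1+a^{+})$, $A^{-}=(a^{-}B+C)/(1+a^{-})$ as vectors, and similarly for the others. Triangle areas are signed: $|\triangle XYZ|$ and $|\triangle ABC|$ have the same sign exactly when the vertex paths $X$-$Y$-$Z$-$X$ and $A$-$B$-$C$-$A$ traverse their triangles in the same rotational direction. *)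

theory Defs
  imports "HOL-Analysis.Analysis"
begin

type_synonym point = "real ^ 2"

definition cross2 :: "point \<Rightarrow> point \<Rightarrow> real" where
  "cross2 u v = u$1 * v$2 - u$2 * v$1"

text \<open>Signed area of the triangle XYZ (positive iff X-Y-Z is counterclockwise).\<close>
definition signed_area :: "point \<Rightarrow> point \<Rightarrow> point \<Rightarrow> real" where
  "signed_area X Y Z = cross2 (Y - X) (Z - X) / 2"

definition collinear3 :: "point \<Rightarrow> point \<Rightarrow> point \<Rightarrow> bool" where
  "collinear3 X Y Z \<longleftrightarrow> cross2 (Y - X) (Z - X) = 0"

definition line :: "point \<Rightarrow> point \<Rightarrow> point set" where
  "line X Y = {X + t *\<^sub>R (Y - X) | t. True}"

text \<open>Signed ratio |XY|/|YZ| of directed segments on a common line (Y \<noteq> Z):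
  the unique real r with Y - X = r (Z - Y).\<close>
definition sratio :: "point \<Rightarrow> point \<Rightarrow> point \<Rightarrow> real" where
  "sratio X Y Z = ((Y - X) \<bullet> (Z - Y)) / ((Z - Y) \<bullet> (Z - Y))"

end

theory Submission
  imports Defs
begin

lemma vec2_eq: "(X::real^2) = Y \<longleftrightarrow> X$1 = Y$1 \<and> X$2 = Y$2"
  by (simp add: vec_eq_iff forall_2)

lemma line_swap: assumes "X \<in> line Y Z" shows "X \<in> line Z Y"
proof -
  from assms obtain t where t: "X = Y + t *\<^sub>R (Z - Y)" unfolding line_def by auto
  have "X = Z + (1 - t) *\<^sub>R (Y - Z)" using t by (simp add: vec2_eq algebra_simps)
  thus ?thesis unfolding line_def by auto
qed

lemma sratio_point:
  assumes "X \<in> line Y Z" "X \<noteq> Z" "Y \<noteq> Z"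
  shows "1 + sratio Y X Z \<noteq> 0 \<and> (1 + sratio Y X Z) *\<^sub>R X = Y + sratio Y X Z *\<^sub>R Z"
proof -
  from assms obtain t where t: "X = Y + t *\<^sub>R (Z - Y)" unfolding line_def by auto
  define w where "w = Z - Y"
  have w0: "w \<bullet> w > 0" using assms(3) unfolding w_def by simp
  have t1: "t \<noteq> 1" using t assms(2) by auto
  have "X - Y = t *\<^sub>R w" "Z - X = (1 - t) *\<^sub>R w" using t by (auto simp: w_def algebra_simps)
  hence "sratio Y X Z = t * (1 - t) * (w \<bullet> w) / ((1-t)*(1-t) * (w \<bullet> w))"
    unfolding sratio_def by simp
  also have "\<dots> = (t * ((1-t) * (w \<bullet> w))) / ((1-t) * ((1-t) * (w \<bullet> w)))"
    by (simp add: ac_simps)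
  also have "\<dots> = t / (1 - t)" using w0 t1 by (intro nonzero_mult_divide_mult_cancel_right) simp
  finally have r: "sratio Y X Z = t / (1 - t)" .
  have "1 + t/(1-t) = 1/(1-t)" using t1 by (simp add: field_simps)
  moreover have "(1/(1-t)) *\<^sub>R X = Y + (t/(1-t)) *\<^sub>R Z" using t t1
    by (simp add: vec2_eq field_simps)
  ultimately show ?thesis using r t1 by simp
qed

lemma noncol_ne: assumes "\<not> collinear3 A B C" shows "A \<noteq> B" "B \<noteq> C" "C \<noteq> A"
  using assms by (auto simp: collinear3_def cross2_def)

lemma cross_rot: "cross2 (C - B) (A - B) = cross2 (B - A) (C - A)"
  by (simp add: cross2_def algebra_simps)

lemma noncol_rot: "collinear3 B C A \<longleftrightarrow> collinear3 A B C"
  unfolding collinear3_def by (simp add: cross_rot)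

lemma bary_unique:
  assumes "\<not> collinear3 A B C" "a1+a2+a3 = b1+b2+b3"
    "a1 *\<^sub>R A + a2 *\<^sub>R B + a3 *\<^sub>R C = b1 *\<^sub>R A + b2 *\<^sub>R B + b3 *\<^sub>R C"
  shows "a1 = b1 \<and> a2 = b2 \<and> a3 = b3"
proof -
  let ?K = "(B$1 - A$1)*(C$2-A$2) - (B$2-A$2)*(C$1-A$1)"
  have K: "?K \<noteq> 0" using assms(1) by (simp add: collinear3_def cross2_def)
  have a1: "a1 = b1+b2+b3-a2-a3" using assms(2) by simp
  from assms(3) have e1: "a1*A$1 + a2*B$1 + a3*C$1 = b1*A$1 + b2*B$1 + b3*C$1"
    and e2: "a1*A$2 + a2*B$2 + a3*C$2 = b1*A$2 + b2*B$2 + b3*C$2" by (simp_all add: vec2_eq)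
  have f1: "(a2-b2)*(B$1-A$1) + (a3-b3)*(C$1-A$1) = 0" using e1 a1 by (simp add: algebra_simps)
  have f2: "(a2-b2)*(B$2-A$2) + (a3-b3)*(C$2-A$2) = 0" using e2 a1 by (simp add: algebra_simps)
  have "(a2-b2) * ?K = (C$2-A$2) * ((a2-b2)*(B$1-A$1) + (a3-b3)*(C$1-A$1)) - (C$1-A$1)*((a2-b2)*(B$2-A$2) + (a3-b3)*(C$2-A$2))"
    by (simp add: algebra_simps)
  hence "(a2-b2) * ?K = 0" using f1 f2 by simp
  hence g2: "a2 = b2" using K by simp
  have "(a3-b3) * ?K = (B$1-A$1) * ((a2-b2)*(B$2-A$2) + (a3-b3)*(C$2-A$2)) - (B$2-A$2)*((a2-b2)*(B$1-A$1) + (a3-b3)*(C$1-A$1))"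
    by (simp add: algebra_simps)
  hence "(a3-b3) * ?K = 0" using f1 f2 by simp
  hence "a3 = b3" using K by simp
  thus ?thesis using g2 a1 by simp
qed

lemma solve_pt:
  assumes "1+c \<noteq> 0" "(1+c) *\<^sub>R X = Y + c *\<^sub>R (Z::point)"
  shows "X = (1/(1+c)) *\<^sub>R Y + (c*(1/(1+c))) *\<^sub>R Z"
proof -
  from assms(2) have e: "(1+c) * X$1 = Y$1 + c*Z$1" "(1+c) * X$2 = Y$2 + c*Z$2" by (simp_all add: vec2_eq)
  have i: "(1/(1+c)) * (1+c) = 1" using assms(1) by simp
  have "X$1 = ((1/(1+c))*(1+c))*X$1" "X$2 = ((1/(1+c))*(1+c))*X$2" by (simp_all only: i mult_1)
  hence "X$1 = (1/(1+c))*((1+c)*X$1)" "X$2 = (1/(1+c))*((1+c)*X$2)" by (simp_all only: mult.assoc)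
  hence "X$1 = (1/(1+c))*(Y$1 + c*Z$1)" "X$2 = (1/(1+c))*(Y$2 + c*Z$2)" by (simp_all only: e)
  thus ?thesis by (simp add: vec2_eq algebra_simps)
qed

lemma inter:
  assumes nc: "\<not> collinear3 A B C"
   and hcp: "1+cp \<noteq> 0" "(1+cp) *\<^sub>R Cp = A + cp *\<^sub>R B"
   and ham: "1+am \<noteq> 0" "(1+am) *\<^sub>R Am = C + am *\<^sub>R B"
   and hap: "1+ap \<noteq> 0" "(1+ap) *\<^sub>R Ap = B + ap *\<^sub>R C"
   and hbm: "1+bm \<noteq> 0" "(1+bm) *\<^sub>R Bm = A + bm *\<^sub>R C"
   and P: "P \<in> line Cp Am" "P \<in> line Ap Bm"
   and D: "1 - ap*am + bm*(1+am) + cp*(1+ap) \<noteq> 0"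
  shows "(1 - ap*am + bm*(1+am) + cp*(1+ap)) *\<^sub>R P
     = (1-ap*am) *\<^sub>R A + (am*bm+cp) *\<^sub>R B + (ap*cp+bm) *\<^sub>R C"
proof -
  define D1 where "D1 = 1 - ap*am + bm*(1+am) + cp*(1+ap)"
  define ic where "ic = 1/(1+cp)"
  define ia where "ia = 1/(1+am)"
  define ip where "ip = 1/(1+ap)"
  define ib where "ib = 1/(1+bm)"
  have iic: "ic*(1+cp) = 1" and iia: "ia*(1+am) = 1" and iip: "ip*(1+ap) = 1" and iib: "ib*(1+bm) = 1"
    using hcp(1) ham(1) hap(1) hbm(1) by (simp_all add: ic_def ia_def ip_def ib_def)
  from P(1) obtain k where k: "P = Cp + k *\<^sub>R (Am - Cp)" unfolding line_def by auto
  from P(2) obtain m where m: "P = Ap + m *\<^sub>R (Bm - Ap)" unfolding line_def by auto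
  note Cp = solve_pt[OF hcp, folded ic_def] and Am = solve_pt[OF ham, folded ia_def]
   and Ap = solve_pt[OF hap, folded ip_def] and Bm = solve_pt[OF hbm, folded ib_def]
  have P1: "P = ((1-k)*ic) *\<^sub>R A + ((1-k)*cp*ic + k*am*ia) *\<^sub>R B + (k*ia) *\<^sub>R C"
    unfolding k Cp Am by (simp add: vec2_eq algebra_simps)
  have P2: "P = (m*ib) *\<^sub>R A + ((1-m)*ip) *\<^sub>R B + ((1-m)*ap*ip + m*bm*ib) *\<^sub>R C"
    unfolding m Ap Bm by (simp add: vec2_eq algebra_simps)
  have s1: "(1-k)*ic + ((1-k)*cp*ic + k*am*ia) + k*ia = 1"
  proof -
    have "(1-k)*ic + ((1-k)*cp*ic + k*am*ia) + k*ia = (1-k)*(ic*(1+cp)) + k*(ia*(1+am))"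
      by (simp add: algebra_simps)
    thus ?thesis using iic iia by simp
  qed
  have s2: "m*ib + (1-m)*ip + ((1-m)*ap*ip + m*bm*ib) = 1"
  proof -
    have "m*ib + (1-m)*ip + ((1-m)*ap*ip + m*bm*ib) = m*(ib*(1+bm)) + (1-m)*(ip*(1+ap))"
      by (simp add: algebra_simps)
    thus ?thesis using iip iib by simp
  qed
  have eqs: "(1-k)*ic = m*ib" "k*ia = (1-m)*ap*ip + m*bm*ib"
    using bary_unique[OF nc _ P1[symmetric, THEN trans, OF P2]] s1 s2 by auto
  define K where "K = k*ia"
  define M where "M = m*ib"
  have kK: "k = (1+am)*K"
  proof -
    have "(1+am)*K = k*(ia*(1+am))" unfolding K_def by (simp add: algebra_simps)
    thus ?thesis using iia by simp
  qed
  have mM: "m = (1+bm)*M"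
  proof -
    have "(1+bm)*M = m*(ib*(1+bm))" unfolding M_def by (simp add: algebra_simps)
    thus ?thesis using iib by simp
  qed
  have eA: "1 - (1+am)*K = (1+cp)*M"
  proof -
    have "(1-k)*(ic*(1+cp)) = M*(1+cp)" using eqs(1) unfolding M_def by simp
    hence "1 - k = M*(1+cp)" using iic by simp
    thus ?thesis using kK by (simp add: algebra_simps)
  qed
  have eC: "(1+ap)*K = ap*(1 - (1+bm)*M) + (1+ap)*bm*M"
  proof -
    have "(1+ap)*K = (1+ap)*((1-m)*ap*ip + m*bm*ib)" using eqs(2) unfolding K_def by simp
    also have "\<dots> = (1-m)*ap*(ip*(1+ap)) + (1+ap)*bm*M" unfolding M_def by (simp add: algebra_simps)
    finally have "(1+ap)*K = (1-m)*ap*(ip*(1+ap)) + (1+ap)*bm*M" .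
    thus ?thesis using iip mM by simp
  qed
  have "D1*K = ap*cp+bm"
  proof -
    have "D1*K - (ap*cp+bm) = (1+cp)*((1+ap)*K - ap*(1 - (1+bm)*M) - (1+ap)*bm*M) + (bm-ap)*((1+am)*K - 1 + (1+cp)*M)"
      unfolding D1_def by algebra
    also have "\<dots> = 0" using eA eC by simp
    finally show ?thesis by simp
  qed
  hence dK: "D1*K = ap*cp+bm" by simp
  have dM: "D1*M = 1 - ap*am"
  proof -
    have "(1+cp)*(D1*M) = D1*(1 - (1+am)*K)" using eA by simp
    also have "\<dots> = D1 - (1+am)*(D1*K)" by (simp add: algebra_simps)
    also have "\<dots> = (1+cp)*(1-ap*am)" unfolding dK by (simp add: D1_def algebra_simps)
    finally show ?thesis using hcp(1) by simp
  qed
  have PKM: "P = M *\<^sub>R A + (1 - M - K) *\<^sub>R B + K *\<^sub>R C"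
  proof -
    have "(1-k)*cp*ic + k*am*ia = 1 - M - K" using s1 eqs(1) unfolding K_def M_def by simp
    thus ?thesis using P1 eqs(1) unfolding K_def M_def by simp
  qed
  have "D1 *\<^sub>R P = (D1*M) *\<^sub>R A + (D1 - D1*M - D1*K) *\<^sub>R B + (D1*K) *\<^sub>R C"
    unfolding PKM by (simp add: scaleR_add_right algebra_simps)
  also have "D1 - D1*M - D1*K = am*bm+cp" unfolding dK dM by (simp add: D1_def algebra_simps)
  finally show ?thesis unfolding D1_def[symmetric] dK dM .
qed

lemma area_bary:
  assumes "p1+p2+p3=1" "q1+q2+q3=1" "r1+r2+r3=1"
    "P = p1 *\<^sub>R A + p2 *\<^sub>R B + p3 *\<^sub>R C"
    "Q = q1 *\<^sub>R A + q2 *\<^sub>R B + q3 *\<^sub>R C"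
    "R = r1 *\<^sub>R A + r2 *\<^sub>R B + r3 *\<^sub>R C"
  shows "signed_area P Q R = (p1*(q2*r3 - q3*r2) - p2*(q1*r3 - q3*r1) + p3*(q1*r2 - q2*r1)) * signed_area A B C"
proof -
  have p1: "p1 = 1 - p2 - p3" and q1: "q1 = 1 - q2 - q3" and r1: "r1 = 1 - r2 - r3" using assms(1-3) by simp_all
  show ?thesis unfolding signed_area_def cross2_def assms(4-6) p1 q1 r1
    by (simp add: algebra_simps)
qed

lemma area_scaled:
  assumes "d1 \<noteq> 0" "d2 \<noteq> 0" "d3 \<noteq> 0"
    "a1+a2+a3=d1" "b1+b2+b3=d2" "c1+c2+c3=d3"
    "d1 *\<^sub>R P = a1 *\<^sub>R A + a2 *\<^sub>R B + a3 *\<^sub>R C"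
    "d2 *\<^sub>R Q = b1 *\<^sub>R A + b2 *\<^sub>R B + b3 *\<^sub>R C"
    "d3 *\<^sub>R R = c1 *\<^sub>R A + c2 *\<^sub>R B + c3 *\<^sub>R C"
  shows "signed_area P Q R = (a1*(b2*c3 - b3*c2) - a2*(b1*c3 - b3*c1) + a3*(b1*c2 - b2*c1)) / (d1*d2*d3) * signed_area A B C"
proof -
  have sc: "X = (a/d) *\<^sub>R U + (b/d) *\<^sub>R V + (c/d) *\<^sub>R W"
    if "d \<noteq> 0" "d *\<^sub>R X = a *\<^sub>R U + b *\<^sub>R V + c *\<^sub>R W" for d a b c and X U V W :: point
  proof -
    have "X = (1/d) *\<^sub>R (d *\<^sub>R X)" using that(1) by simp
    also have "\<dots> = (a/d) *\<^sub>R U + (b/d) *\<^sub>R V + (c/d) *\<^sub>R W" unfolding that(2) by (simp add: scaleR_add_right)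
    finally show ?thesis .
  qed
  have sm: "a/d + b/d + c/d = 1" if "d \<noteq> 0" "a+b+c = d" for a b c d :: real
    using that by (simp add: add_divide_distrib[symmetric])
  have "signed_area P Q R = ((a1/d1)*((b2/d2)*(c3/d3) - (b3/d2)*(c2/d3)) - (a2/d1)*((b1/d2)*(c3/d3) - (b3/d2)*(c1/d3)) + (a3/d1)*((b1/d2)*(c2/d3) - (b2/d2)*(c1/d3))) * signed_area A B C"
    by (rule area_bary[OF sm[OF assms(1,4)] sm[OF assms(2,5)] sm[OF assms(3,6)] sc[OF assms(1,7)] sc[OF assms(2,8)] sc[OF assms(3,9)]])
  also have "\<dots> = (a1*(b2*c3 - b3*c2) - a2*(b1*c3 - b3*c1) + a3*(b1*c2 - b2*c1)) / (d1*d2*d3) * signed_area A B C"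
    using assms(1-3) by (simp add: field_simps)
  finally show ?thesis .
qed

lemma det_id:
  fixes ap am bp bm cp cm :: real
  shows "(1-ap*am)*((1-bp*bm)*(1-cp*cm) - (bm*cm+ap)*(cp*bp+am))
       - (am*bm+cp)*((bp*ap+cm)*(1-cp*cm) - (bm*cm+ap)*(cm*am+bp))
       + (ap*cp+bm)*((bp*ap+cm)*(cp*bp+am) - (1-bp*bm)*(cm*am+bp))
     = (ap*bp*cp + am*bm*cm + ap*am + bp*bm + cp*cm - 1)\<^sup>2"
  by (simp add: algebra_simps power2_eq_square)

theorem theorem5:
  fixes A B C Ap Am Bp Bm Cp Cm P Q R :: point
  assumes ABC: "\<not> collinear3 A B C"
    and onA: "Ap \<in> line B C" "Am \<in> line B C"
    and onB: "Bp \<in> line C A" "Bm \<in> line C A"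
    and onC: "Cp \<in> line A B" "Cm \<in> line A B"
    and ne: "Ap \<noteq> C" "Am \<noteq> B" "Bp \<noteq> A" "Bm \<noteq> C" "Cp \<noteq> B" "Cm \<noteq> A"
    and D1: "1 - sratio B Ap C * sratio C Am B + sratio A Bm C * (1 + sratio C Am B)
               + sratio A Cp B * (1 + sratio B Ap C) \<noteq> 0"
    and D2: "1 - sratio C Bp A * sratio A Bm C + sratio B Cm A * (1 + sratio A Bm C)
               + sratio B Ap C * (1 + sratio C Bp A) \<noteq> 0"
    and D3: "1 - sratio A Cp B * sratio B Cm A + sratio C Am B * (1 + sratio B Cm A)
               + sratio C Bp A * (1 + sratio A Cp B) \<noteq> 0"
    and P: "P \<in> line Cp Am" "P \<in> line Ap Bm"
    and Q: "Q \<in> line Ap Bm" "Q \<in> line Bp Cm"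
    and R: "R \<in> line Bp Cm" "R \<in> line Cp Am"
  shows "let ap = sratio B Ap C; bp = sratio C Bp A; cp = sratio A Cp B;
             am = sratio C Am B; bm = sratio A Bm C; cm = sratio B Cm A;
             d1 = 1 - ap * am + bm * (1 + am) + cp * (1 + ap);
             d2 = 1 - bp * bm + cm * (1 + bm) + ap * (1 + bp);
             d3 = 1 - cp * cm + am * (1 + cm) + bp * (1 + cp)
         in signed_area P Q R
            = signed_area A B C * (ap * bp * cp + am * bm * cm + ap * am + bp * bm + cp * cm - 1)\<^sup>2
              / (d1 * d2 * d3)"
proof -
  have ne3: "A \<noteq> B" "B \<noteq> C" "C \<noteq> A" using noncol_ne[OF ABC] by auto
  define ap where "ap = sratio B Ap C"
  define bp where "bp = sratio C Bp A"
  define cp where "cp = sratio A Cp B"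
  define am where "am = sratio C Am B"
  define bm where "bm = sratio A Bm C"
  define cm where "cm = sratio B Cm A"
  have hap: "1+ap \<noteq> 0" "(1+ap) *\<^sub>R Ap = B + ap *\<^sub>R C"
    using sratio_point[OF onA(1) ne(1) ne3(2)] unfolding ap_def by auto
  have ham: "1+am \<noteq> 0" "(1+am) *\<^sub>R Am = C + am *\<^sub>R B"
    using sratio_point[OF line_swap[OF onA(2)] ne(2) ne3(2)[symmetric]] unfolding am_def by auto
  have hbp: "1+bp \<noteq> 0" "(1+bp) *\<^sub>R Bp = C + bp *\<^sub>R A"
    using sratio_point[OF onB(1) ne(3) ne3(3)] unfolding bp_def by auto
  have hbm: "1+bm \<noteq> 0" "(1+bm) *\<^sub>R Bm = A + bm *\<^sub>R C"
    using sratio_point[OF line_swap[OF onB(2)] ne(4) ne3(3)[symmetric]] unfolding bm_def by auto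
  have hcp: "1+cp \<noteq> 0" "(1+cp) *\<^sub>R Cp = A + cp *\<^sub>R B"
    using sratio_point[OF onC(1) ne(5) ne3(1)] unfolding cp_def by auto
  have hcm: "1+cm \<noteq> 0" "(1+cm) *\<^sub>R Cm = B + cm *\<^sub>R A"
    using sratio_point[OF line_swap[OF onC(2)] ne(6) ne3(1)[symmetric]] unfolding cm_def by auto
  have nc2: "\<not> collinear3 B C A" and nc3: "\<not> collinear3 C A B" using ABC noncol_rot by auto
  define d1 where "d1 = 1 - ap * am + bm * (1 + am) + cp * (1 + ap)"
  define d2 where "d2 = 1 - bp * bm + cm * (1 + bm) + ap * (1 + bp)"
  define d3 where "d3 = 1 - cp * cm + am * (1 + cm) + bp * (1 + cp)"
  have d1: "d1 \<noteq> 0" using D1 unfolding d1_def ap_def am_def bm_def cp_def .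
  have d2: "d2 \<noteq> 0" using D2 unfolding d2_def bp_def bm_def cm_def ap_def .
  have d3: "d3 \<noteq> 0" using D3 unfolding d3_def cp_def cm_def am_def bp_def .
  have eP: "d1 *\<^sub>R P = (1-ap*am) *\<^sub>R A + (am*bm+cp) *\<^sub>R B + (ap*cp+bm) *\<^sub>R C"
    using inter[OF ABC hcp ham hap hbm P d1[unfolded d1_def]] unfolding d1_def .
  have eQ0: "d2 *\<^sub>R Q = (1-bp*bm) *\<^sub>R B + (bm*cm+ap) *\<^sub>R C + (bp*ap+cm) *\<^sub>R A"
    using inter[OF nc2 hap hbm hbp hcm Q d2[unfolded d2_def]] unfolding d2_def .
  have eQ: "d2 *\<^sub>R Q = (bp*ap+cm) *\<^sub>R A + (1-bp*bm) *\<^sub>R B + (bm*cm+ap) *\<^sub>R C"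
    using eQ0 by (simp add: algebra_simps)
  have eR0: "d3 *\<^sub>R R = (1-cp*cm) *\<^sub>R C + (cm*am+bp) *\<^sub>R A + (cp*bp+am) *\<^sub>R B"
    using inter[OF nc3 hbp hcm hcp ham R d3[unfolded d3_def]] unfolding d3_def .
  have eR: "d3 *\<^sub>R R = (cm*am+bp) *\<^sub>R A + (cp*bp+am) *\<^sub>R B + (1-cp*cm) *\<^sub>R C"
    using eR0 by (simp add: algebra_simps)
  have area: "signed_area P Q R = ((1-ap*am)*((1-bp*bm)*(1-cp*cm) - (bm*cm+ap)*(cp*bp+am))
       - (am*bm+cp)*((bp*ap+cm)*(1-cp*cm) - (bm*cm+ap)*(cm*am+bp))
       + (ap*cp+bm)*((bp*ap+cm)*(cp*bp+am) - (1-bp*bm)*(cm*am+bp))) / (d1*d2*d3) * signed_area A B C"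
    by (rule area_scaled[OF d1 d2 d3 _ _ _ eP eQ eR]) (simp_all add: d1_def d2_def d3_def algebra_simps)
  show ?thesis unfolding Let_def ap_def[symmetric] bp_def[symmetric] cp_def[symmetric]
      am_def[symmetric] bm_def[symmetric] cm_def[symmetric] d1_def[symmetric] d2_def[symmetric] d3_def[symmetric]
    unfolding area det_id by simp
qed

end
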